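(* Fix $a\in[0,1]$, $b\in\mathbb Z$, $x\in\mathbb R$, and let $m=\lfloor a\log_2 n\rfloor+b$ and $l=x\sqrt{\sigma_a^2\ln n}+\mu_a\ln n$. If $m\ge0$ (for all large $n$), then, with $N$ a standard Gaussian variable, \[\lim_{n\to\infty}\mathbb E\big[\widetilde G_{m,l}(|\mathcal S_n(1)|)\big]=\mathbb E\left[\Phi\left(\frac{\sqrt{2\sigma_a^2}\,x-N}{\sqrt{\mu_a}}\right)\right].\]
   Context: Kingman's $n$-coalescent $(F_n,\dots,F_1)$: forests on $[n]$; $F_n$ has no edges; for $2\le i\le n$, list the trees of $F_i$ as $T^{(i)}_1,\dots,T^{(i)}_i$ in increasing order of smallest label, choose $\{a_i,b_i\}$ uniformly among 2-subsets of $[i]$ and an independent fair bit $\xi_i$ (independent over $i$), and obtain $F_{i-1}$ by adding an edge between the roots of $T^{(i)}_{a_i},T^{(i)}_{b_i}$ directed towards one of them according to $\xi_i$. $T_i(v)$ is the tree of $F_i$ containing $v$, and $\mathcal S_n(v)=\{2\le i\le n:T_i(v)\in\{T^{(i)}_{a_i},T^{(i)}_{b_i}\}\}$ (so $|\mathcal S_n(v)|$ is a sum of independent Bernoulli$(2/i)$ variables, $2\le i\le n$). For integers $d$ and reals $l$, $\widetilde G_{d,l}(t)=\mathbb P(\mathrm{Bin}(t-d,1/2)<l)\mathbf 1\{t\ge d\}$ for $t\in\mathbb N$. $\mu_a=1-(a\log_2 e)/2$, $\sigma_a^2=1-(a\log_2 e)/4$, and $\Phi$ is the standard Gaussian distribution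 function. *)

theory Defs
  imports "HOL-Probability.Probability"
begin

text \<open>Law of |S_n(1)|: the sum of independent Bernoulli(2/i) variables, 2 <= i <= n
  (as stated in the context for Kingman's n-coalescent).\<close>
fun S_size_dist :: "nat \<Rightarrow> nat pmf" where
  "S_size_dist 0 = return_pmf 0"
| "S_size_dist (Suc n) =
     (if Suc n < 2 then return_pmf 0
      else bind_pmf (S_size_dist n) (\<lambda>s.
             map_pmf (\<lambda>b. s + (if b then 1 else 0)) (bernoulli_pmf (2 / real (Suc n)))))"

definition Gtilde :: "int \<Rightarrow> real \<Rightarrow> nat \<Rightarrow> real" where
  "Gtilde d l t =
     (if int t \<ge> d
      then measure_pmf.prob (binomial_pmf (nat (int t - d)) (1/2)) {k. real k < l}
      else 0)"

definition mu_a :: "real \<Rightarrow> real" where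
  "mu_a a = 1 - (a * log 2 (exp 1)) / 2"

definition sigma2_a :: "real \<Rightarrow> real" where
  "sigma2_a a = 1 - (a * log 2 (exp 1)) / 4"

definition std_normal :: "real measure" where
  "std_normal = density lborel std_normal_density"

definition Phi :: "real \<Rightarrow> real" where
  "Phi z = measure std_normal {..z}"

end

theory Submission
  imports Defs "HOL-Real_Asymp.Real_Asymp"
begin


lemma S_set: "set_pmf (S_size_dist n) \<subseteq> {..n}"
proof (induction n)
  case 0 then show ?case by simp
next
  case (Suc n)
  then show ?case by (auto split: if_splits)
qed

lemma S_finite: "finite (set_pmf (S_size_dist n))"
  using S_set finite_subset by blast

lemma integral_bernoulli_gen:
  fixes f :: "bool \<Rightarrow> 'b::{banach, second_countable_topology}"
  assumes "0 \<le> p" "p \<le> 1"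
  shows "measure_pmf.expectation (bernoulli_pmf p) f = p *\<^sub>R f True + (1 - p) *\<^sub>R f False"
  using assms by (subst integral_measure_pmf[of UNIV]) (auto simp: UNIV_bool)

lemma S_step:
  fixes h :: "nat \<Rightarrow> 'b::{banach, second_countable_topology}"
  assumes "n \<ge> 1"
  shows "measure_pmf.expectation (S_size_dist (Suc n)) h =
    measure_pmf.expectation (S_size_dist n) (\<lambda>s. (2 / real (Suc n)) *\<^sub>R h (s+1) + (1 - 2 / real (Suc n)) *\<^sub>R h s)"
proof -
  let ?p = "2 / real (Suc n)"
  have p: "0 \<le> ?p" "?p \<le> 1" using assms by (auto simp: field_simps)
  have "measure_pmf.expectation (S_size_dist (Suc n)) h =
     (\<Sum>a\<in>{..n}. pmf (S_size_dist n) a *\<^sub>R measure_pmf.expectation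
        (map_pmf (\<lambda>b. a + (if b then 1 else 0)) (bernoulli_pmf ?p)) h)"
  proof -
    have eq: "S_size_dist (Suc n) = bind_pmf (S_size_dist n) (\<lambda>s. map_pmf (\<lambda>b. s + (if b then 1 else 0)) (bernoulli_pmf ?p))"
      using assms by simp
    show ?thesis unfolding eq using S_set[of n] by (intro pmf_expectation_bind) auto
  qed
  also have "\<dots> = (\<Sum>a\<in>{..n}. pmf (S_size_dist n) a *\<^sub>R (?p *\<^sub>R h (a+1) + (1 - ?p) *\<^sub>R h a))"
    using p by (simp add: integral_bernoulli_gen)
  also have "\<dots> = measure_pmf.expectation (S_size_dist n) (\<lambda>s. ?p *\<^sub>R h (s+1) + (1 - ?p) *\<^sub>R h s)"
    using S_set[of n] by (intro integral_measure_pmf[symmetric]) auto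
  finally show ?thesis .
qed

lemma S_gf:
  fixes z :: "'a::{real_normed_field, banach, second_countable_topology}"
  shows "measure_pmf.expectation (S_size_dist n) (\<lambda>s. z ^ s) = (\<Prod>i\<in>{2..n}. 1 - of_real (2 / real i) + of_real (2 / real i) * z)"
proof (induction n)
  case 0 then show ?case by simp
next
  case (Suc n)
  show ?case
  proof (cases "n = 0")
    case True then show ?thesis by simp
  next
    case False
    let ?p = "2 / real (Suc n)"
    have "measure_pmf.expectation (S_size_dist (Suc n)) (\<lambda>s. z ^ s) =
      measure_pmf.expectation (S_size_dist n) (\<lambda>s. (1 - of_real ?p + of_real ?p * z) * z ^ s)"
      using False by (subst S_step) (auto simp: scaleR_conv_of_real algebra_simps)
    also have "\<dots> = (1 - of_real ?p + of_real ?p * z) * measure_pmf.expectation (S_size_dist n) (\<lambda>s. z ^ s)"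
      by (rule integral_mult_right_zero)
    also have "\<dots> = (\<Prod>i\<in>{2..Suc n}. 1 - of_real (2 / real i) + of_real (2 / real i) * z)"
      using Suc False by (simp add: prod.nat_ivl_Suc' mult.commute)
    finally show ?thesis .
  qed
qed



lemma lim1: "((\<lambda>L::real. L * (1 - cos (c / sqrt L))) \<longlongrightarrow> c*c/2) at_top"
  by real_asymp
lemma lim2: "((\<lambda>L::real. L * sin (c / sqrt L) - c * sqrt L) \<longlongrightarrow> 0) at_top"
  by real_asymp
lemma lim3: "((\<lambda>L::real. L * ln (cos (c / (2 * sqrt L)))) \<longlongrightarrow> - (c*c/8)) at_top"
  by real_asymp
lemma lim4: "((\<lambda>L::real. 1 - cos (c / sqrt L)) \<longlongrightarrow> 0) at_top"
  by real_asymp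
lemma lim5: "((\<lambda>L::real. ln (cos (c / (2 * sqrt L)))) \<longlongrightarrow> 0) at_top"
  by real_asymp
lemma lim6: "((\<lambda>L::real. sin (c / sqrt L)) \<longlongrightarrow> 0) at_top"
  by real_asymp
lemma lim7: "((\<lambda>L::real. c / sqrt L) \<longlongrightarrow> 0) at_top"
  by real_asymp
lemma ev_cos: "eventually (\<lambda>L::real. cos (c / (2 * sqrt L)) > 0) at_top"
  by real_asymp

lemma exp_quad:
  fixes w :: complex
  assumes "norm w \<le> 1"
  shows "norm (exp w - 1 - w) \<le> norm w ^ 2"
proof -
  have s: "summable (\<lambda>n. norm (inverse (fact (n + 2)) *\<^sub>R (w ^ (n + 2))))"
    using summable_norm_exp[of w] by (subst summable_iff_shift[where k=2]) (simp add: scaleR_conv_of_real)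
  have "exp w - 1 - w = (\<Sum>n. inverse (fact (n + 2)) *\<^sub>R (w ^ (n + 2)))"
    using exp_first_two_terms[of w] by simp
  also have "norm \<dots> \<le> (\<Sum>n. norm (inverse (fact (n + 2)) *\<^sub>R (w ^ (n + 2))))"
    by (rule summable_norm[OF s])
  also have "\<dots> = (\<Sum>n. inverse (fact (n + 2)) *\<^sub>R (norm w ^ (n + 2)))"
    by (simp add: norm_mult norm_power)
  also have "\<dots> = exp (norm w) - 1 - norm w"
    using exp_first_two_terms[of "norm w"] by simp
  also have "\<dots> \<le> norm w ^ 2"
    using exp_bound[of "norm w"] assms by simp
  finally show ?thesis .
qed



lemma w_factor: "(1 + exp (\<i> * complex_of_real u)) / 2 = exp (\<i> * complex_of_real (u/2)) * complex_of_real (cos (u/2))"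
proof -
  define E where "E = exp (\<i> * complex_of_real (u/2))"
  define E' where "E' = exp (-(\<i> * complex_of_real (u/2)))"
  have c: "complex_of_real (cos (u/2)) = (E + E') / 2"
    unfolding E_def E'_def by (simp add: cos_of_real[symmetric] cos_exp_eq)
  have e1: "E * E = exp (\<i> * complex_of_real u)"
    unfolding E_def by (subst mult_exp_exp) (simp add: field_simps)
  have e2: "E * E' = 1"
    unfolding E_def E'_def by (subst mult_exp_exp) simp
  have "E * complex_of_real (cos (u/2)) = (E * E + E * E') / 2"
    unfolding c by (simp add: algebra_simps)
  also have "\<dots> = (1 + exp (\<i> * complex_of_real u)) / 2" using e1 e2 by simp
  finally show ?thesis unfolding E_def by simp
qed

lemma prod_identity:
  fixes u h th q :: real and m :: nat
  assumes cpos: "cos (u/2) > 0"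
  shows "exp (\<i> * of_real th) * exp (- ((1 - exp (\<i> * of_real u)) * of_real h)) / ((1 + exp (\<i> * of_real u)) / 2) ^ m
     = exp (complex_of_real (-(1 - cos u) * h - real m * ln (cos (u/2))) + \<i> * complex_of_real (th + sin u * h - u * real m / 2))"
proof -
  have wm: "((1 + exp (\<i> * of_real u)) / 2) ^ m = exp (\<i> * of_real (u * real m / 2) + of_real (real m * ln (cos (u/2))))"
  proof -
    have "((1 + exp (\<i> * of_real u)) / 2) ^ m = exp (\<i> * complex_of_real (u/2)) ^ m * complex_of_real (cos (u/2)) ^ m"
      by (simp add: w_factor power_mult_distrib)
    also have "exp (\<i> * complex_of_real (u/2)) ^ m = exp (of_nat m * (\<i> * complex_of_real (u/2)))"
      by (subst exp_of_nat_mult[symmetric]) (simp add: field_simps)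
    also have "complex_of_real (cos (u/2)) ^ m = exp (of_real (real m * ln (cos (u/2))))"
    proof -
      have r: "cos (u/2) ^ m = exp (real m * ln (cos (u/2)))" using cpos by (subst exp_of_nat_mult) simp
      show ?thesis by (metis r of_real_power exp_of_real)
    qed
    finally show ?thesis by (simp add: mult_exp_exp field_simps)
  qed
  have z: "1 - exp (\<i> * of_real u) = complex_of_real (1 - cos u) - \<i> * of_real (sin u)"
    by (simp add: exp_Euler cos_of_real sin_of_real algebra_simps)
  show ?thesis unfolding wm
    by (simp add: z exp_diff[symmetric] mult_exp_exp algebra_simps)
qed



lemma h_harm: "n \<ge> 1 \<Longrightarrow> (\<Sum>i\<in>{2..n}. 1 / real i) = harm n - 1"
proof (induction n rule: dec_induct)
  case base then show ?case by (simp add: harm_def)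
next
  case (step k)
  have "{2..Suc k} = insert (Suc k) {2..k}" using step by auto
  then show ?case using step by (simp add: harm_Suc inverse_eq_divide)
qed

lemma sum_inv_sq: "n \<ge> 1 \<Longrightarrow> (\<Sum>i\<in>{2..n}. 1 / real i ^ 2) \<le> 1 - 1 / real n"
proof (induction n rule: dec_induct)
  case base then show ?case by simp
next
  case (step k)
  have "{2..Suc k} = insert (Suc k) {2..k}" using step by auto
  then have "(\<Sum>i\<in>{2..Suc k}. 1 / real i ^ 2) = (\<Sum>i\<in>{2..k}. 1 / real i ^ 2) + 1 / real (Suc k) ^ 2"
    by simp
  also have "\<dots> \<le> 1 - 1 / real k + 1 / real (Suc k) ^ 2" using step by simp
  also have "\<dots> \<le> 1 - 1 / real (Suc k)"
  proof -
    have "1 / real (Suc k) ^ 2 \<le> 1 / (real k * real (Suc k))"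
      by (rule divide_left_mono) (use step(1) in \<open>auto simp: power2_eq_square\<close>)
    also have "\<dots> = 1 / real k - 1 / real (Suc k)" using step(1) by (simp add: field_simps)
    finally have "1 / real (Suc k) ^ 2 \<le> 1 / real k - 1 / real (Suc k)" .
    then show ?thesis by simp
  qed
  finally show ?case .
qed

lemma bnd_null:
  fixes f g :: "nat \<Rightarrow> real"
  assumes "eventually (\<lambda>n. \<bar>g n\<bar> \<le> B) sequentially" "f \<longlonglongrightarrow> 0"
  shows "(\<lambda>n. f n * g n) \<longlonglongrightarrow> 0"
proof (rule Lim_null_comparison)
  show "eventually (\<lambda>n. norm (f n * g n) \<le> \<bar>f n\<bar> * B) sequentially"
    using assms(1) by eventually_elim (simp add: abs_mult mult_left_mono)
  show "(\<lambda>n. \<bar>f n\<bar> * B) \<longlonglongrightarrow> 0"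
    using tendsto_mult_left_zero[OF tendsto_rabs_zero[OF assms(2)]] by simp
qed

lemma prod_bound:
  fixes u :: real
  defines "z \<equiv> 1 - exp (\<i> * complex_of_real u)"
  assumes "n \<ge> 1"
  shows "norm ((\<Prod>i\<in>{2..n}. 1 - complex_of_real (1 / real i) * z) - exp (- (z * complex_of_real (\<Sum>i\<in>{2..n}. 1 / real i)))) \<le> norm z ^ 2"
proof -
  have nz: "norm z \<le> 2" unfolding z_def
    using norm_triangle_ineq4[of 1 "exp (\<i> * complex_of_real u)"] by simp
  have rez: "Re z \<ge> 0" unfolding z_def by (simp add: Re_exp)
  have e: "exp (- (z * complex_of_real (\<Sum>i\<in>{2..n}. 1 / real i))) = (\<Prod>i\<in>{2..n}. exp (- (complex_of_real (1 / real i) * z)))"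
    by (simp add: exp_sum[symmetric] sum_distrib_left sum_negf mult.commute)
  have "norm ((\<Prod>i\<in>{2..n}. 1 - complex_of_real (1 / real i) * z) - (\<Prod>i\<in>{2..n}. exp (- (complex_of_real (1 / real i) * z))))
      \<le> (\<Sum>i\<in>{2..n}. norm ((1 - complex_of_real (1 / real i) * z) - exp (- (complex_of_real (1 / real i) * z))))"
  proof (rule norm_prod_diff)
    fix i assume i: "i \<in> {2..n}"
    have "1 - complex_of_real (1 / real i) * z = complex_of_real (1 - 1 / real i) + complex_of_real (1 / real i) * exp (\<i> * complex_of_real u)"
      unfolding z_def by (simp add: algebra_simps)
    also have "norm \<dots> \<le> norm (complex_of_real (1 - 1 / real i)) + norm (complex_of_real (1 / real i) * exp (\<i> * complex_of_real u))"
      by (rule norm_triangle_ineq)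
    also have "\<dots> = 1"
    proof -
      have a: "norm (complex_of_real (1 - 1 / real i)) = 1 - 1 / real i"
        by (simp only: norm_of_real) (use i in auto)
      have b: "norm (complex_of_real (1 / real i) * exp (\<i> * complex_of_real u)) = 1 / real i"
        by (simp only: norm_mult norm_of_real norm_exp_eq_Re) simp
      show ?thesis by (simp only: a b)
    qed
    finally show "norm (1 - complex_of_real (1 / real i) * z) \<le> 1" .
    show "norm (exp (- (complex_of_real (1 / real i) * z))) \<le> 1"
      using rez i by simp
  qed
  also have "\<dots> \<le> (\<Sum>i\<in>{2..n}. norm z ^ 2 * (1 / real i ^ 2))"
  proof (rule sum_mono)
    fix i assume i: "i \<in> {2..n}"
    have nw: "norm (- (complex_of_real (1 / real i) * z)) \<le> 1"
    proof -
      have "norm (- (complex_of_real (1 / real i) * z)) = norm z / real i"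
        by (simp only: norm_minus_cancel norm_mult norm_of_real) simp
      also have "\<dots> \<le> 2 / 2" using nz i by (intro frac_le) auto
      finally show ?thesis by simp
    qed
    have "norm ((1 - complex_of_real (1 / real i) * z) - exp (- (complex_of_real (1 / real i) * z)))
        = norm (exp (- (complex_of_real (1 / real i) * z)) - 1 - (- (complex_of_real (1 / real i) * z)))"
      by (simp add: norm_minus_commute algebra_simps)
    also have "\<dots> \<le> norm (- (complex_of_real (1 / real i) * z)) ^ 2"
      by (rule exp_quad[OF nw])
    also have "\<dots> = norm z ^ 2 * (1 / real i ^ 2)"
    proof -
      have "norm (- (complex_of_real (1 / real i) * z)) = norm z / real i"
        by (simp only: norm_minus_cancel norm_mult norm_of_real) simp
      then show ?thesis by (simp add: power_divide)
    qed
    finally show "norm ((1 - complex_of_real (1 / real i) * z) - exp (- (complex_of_real (1 / real i) * z))) \<le> norm z ^ 2 * (1 / real i ^ 2)" .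
  qed
  also have "\<dots> = norm z ^ 2 * (\<Sum>i\<in>{2..n}. 1 / real i ^ 2)"
    by (simp add: sum_distrib_left)
  also have "\<dots> \<le> norm z ^ 2 * 1"
  proof (intro mult_left_mono)
    have "0 \<le> 1 / real n" by simp
    then show "(\<Sum>i\<in>{2..n}. 1 / real i ^ 2) \<le> 1" using sum_inv_sq[OF assms(2)] by linarith
  qed simp
  finally show ?thesis using e by simp
qed



lemma char_asymp:
  fixes t \<sigma> \<mu> \<kappa> B :: real and m :: "nat \<Rightarrow> nat"
  assumes \<sigma>: "\<sigma> > 0" and rel1: "\<mu> + \<kappa>/2 = 1" and rel2: "\<sigma>^2 = 1 - \<kappa>/4"
    and mb: "eventually (\<lambda>n. \<bar>real (m n) - \<kappa> * ln (real n)\<bar> \<le> B) sequentially"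
  defines "w \<equiv> \<lambda>n. (1 + exp (\<i> * complex_of_real (t / (\<sigma> * sqrt (ln (real n)))))) / 2"
  shows "(\<lambda>n. exp (\<i> * complex_of_real (- (t * \<mu> * ln (real n) / (\<sigma> * sqrt (ln (real n)))))) *
            (\<Prod>i\<in>{2..n}. 1 - complex_of_real (2 / real i) + complex_of_real (2 / real i) * w n) / w n ^ m n)
          \<longlonglongrightarrow> complex_of_real (exp (- (t^2) / 2))"
    and "(\<lambda>n. 1 / norm (w n) ^ m n) \<longlonglongrightarrow> exp (\<kappa> * ((t/\<sigma>) * (t/\<sigma>)) / 8)"
proof -
  define L where "L n = ln (real n)" for n
  define c where "c = t / \<sigma>"
  define u where "u n = c / sqrt (L n)" for n
  have u_eq: "t / (\<sigma> * sqrt (ln (real n))) = u n" for n by (simp add: u_def c_def L_def)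
  have Lf: "filterlim L at_top sequentially"
    unfolding L_def by (rule filterlim_compose[OF ln_at_top filterlim_real_sequentially])
  have u2: "u n / 2 = c / (2 * sqrt (L n))" for n by (simp add: u_def)
  have l1: "(\<lambda>n. L n * (1 - cos (u n))) \<longlonglongrightarrow> c*c/2"
    using filterlim_compose[OF lim1 Lf] by (simp add: u_def)
  have l2: "(\<lambda>n. L n * sin (u n) - c * sqrt (L n)) \<longlonglongrightarrow> 0"
    using filterlim_compose[OF lim2 Lf] by (simp add: u_def)
  have l3: "(\<lambda>n. L n * ln (cos (u n / 2))) \<longlonglongrightarrow> - (c*c/8)"
    using filterlim_compose[OF lim3 Lf] by (simp add: u2)
  have l4: "(\<lambda>n. 1 - cos (u n)) \<longlonglongrightarrow> 0"
    using filterlim_compose[OF lim4 Lf] by (simp add: u_def)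
  have l5: "(\<lambda>n. ln (cos (u n / 2))) \<longlonglongrightarrow> 0"
    using filterlim_compose[OF lim5 Lf] by (simp add: u2)
  have l6: "(\<lambda>n. sin (u n)) \<longlonglongrightarrow> 0"
    using filterlim_compose[OF lim6 Lf] by (simp add: u_def)
  have l7: "u \<longlonglongrightarrow> 0"
    using filterlim_compose[OF lim7[of c] Lf] unfolding u_def[abs_def] by simp
  have evc: "eventually (\<lambda>n. cos (u n / 2) > 0) sequentially"
    using filterlim_iff[THEN iffD1, OF Lf, rule_format, OF ev_cos] by (simp add: u2)
  have evL: "eventually (\<lambda>n. L n > 0) sequentially"
    using filterlim_at_top_dense[THEN iffD1, OF Lf] by blast
  define dh where "dh n = harm n - 1 - L n" for n
  have ldh: "dh \<longlonglongrightarrow> euler_mascheroni - 1"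
    unfolding dh_def L_def using tendsto_diff[OF euler_mascheroni_LIMSEQ tendsto_const[of 1]]
    by (simp add: algebra_simps)
  define dm where "dm n = real (m n) - \<kappa> * L n" for n
  have dmb: "eventually (\<lambda>n. \<bar>dm n\<bar> \<le> B) sequentially" using mb by (simp add: dm_def L_def)
  define R where "R n = real (m n) * ln (cos (u n / 2))" for n
  have R_eq: "R n = \<kappa> * (L n * ln (cos (u n / 2))) + ln (cos (u n / 2)) * dm n" for n
    by (simp add: R_def dm_def algebra_simps)
  have lR: "R \<longlonglongrightarrow> \<kappa> * (- (c*c/8))"
    unfolding R_eq using tendsto_add[OF tendsto_mult[OF tendsto_const l3] bnd_null[OF dmb l5]] by simp
  define z where "z n = 1 - exp (\<i> * complex_of_real (u n))" for n
  define h where "h n = (\<Sum>i\<in>{2..n}. 1 / real i)" for n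
  define th where "th n = - (t * \<mu> * L n / (\<sigma> * sqrt (L n)))" for n
  have w_eq: "w n = (1 + exp (\<i> * complex_of_real (u n))) / 2" for n by (simp add: w_def u_eq)
  have nw: "norm (w n) = cos (u n / 2)" if "cos (u n / 2) > 0" for n
    unfolding w_eq w_factor using that by (simp add: norm_mult)
  have nwm: "eventually (\<lambda>n. norm (w n) ^ m n = exp (R n)) sequentially"
    using evc proof eventually_elim
    case (elim n)
    then show ?case by (simp add: nw R_def) (subst exp_of_nat_mult, simp)
  qed
  have lK: "(\<lambda>n. 1 / norm (w n) ^ m n) \<longlonglongrightarrow> exp (\<kappa> * (c*c) / 8)"
  proof -
    have "(\<lambda>n. exp (- R n)) \<longlonglongrightarrow> exp (- (\<kappa> * (- (c*c/8))))"
      by (intro tendsto_intros lR)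
    then have "(\<lambda>n. exp (- R n)) \<longlonglongrightarrow> exp (\<kappa> * (c*c) / 8)" by simp
    then show ?thesis
      by (rule Lim_transform_eventually) (use nwm in \<open>eventually_elim, simp add: exp_minus field_simps\<close>)
  qed
  then show "(\<lambda>n. 1 / norm (w n) ^ m n) \<longlonglongrightarrow> exp (\<kappa> * ((t/\<sigma>) * (t/\<sigma>)) / 8)"
    by (simp add: c_def)
  have h_eq: "h n = L n + dh n" if "n \<ge> 1" for n
    using h_harm[OF that] by (simp add: h_def dh_def)
  define ReE where "ReE n = -(1 - cos (u n)) * h n - real (m n) * ln (cos (u n / 2))" for n
  define ImE where "ImE n = th n + sin (u n) * h n - u n * real (m n) / 2" for n
  have ReE_ev: "eventually (\<lambda>n. ReE n = -(L n * (1 - cos (u n))) - (1 - cos (u n)) * dh n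
      - \<kappa> * (L n * ln (cos (u n / 2))) - ln (cos (u n / 2)) * dm n) sequentially"
    using eventually_ge_at_top[of 1] proof eventually_elim
    case (elim n)
    then show ?case by (simp add: ReE_def h_eq dm_def algebra_simps)
  qed
  have ct: "c * c * \<sigma>^2 = t^2" unfolding c_def using \<sigma> by (simp add: field_simps power2_eq_square)
  have lReE: "ReE \<longlonglongrightarrow> - (t^2) / 2"
  proof -
    have "(\<lambda>n. -(L n * (1 - cos (u n))) - (1 - cos (u n)) * dh n
      - \<kappa> * (L n * ln (cos (u n / 2))) - ln (cos (u n / 2)) * dm n)
      \<longlonglongrightarrow> -(c*c/2) - 0 * (euler_mascheroni - 1) - \<kappa> * (- (c*c/8)) - 0"
      by (intro tendsto_intros l1 l3 l4 ldh bnd_null[OF dmb l5])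
    also have "-(c*c/2) - 0 * (euler_mascheroni - 1) - \<kappa> * (- (c*c/8)) - 0 = - (c * c * \<sigma>^2) / 2"
      by (simp add: rel2 field_simps)
    also have "\<dots> = - (t^2) / 2" by (simp add: ct)
    finally show ?thesis by (rule Lim_transform_eventually) (use ReE_ev in \<open>eventually_elim, simp\<close>)
  qed
  have ImE_ev: "eventually (\<lambda>n. ImE n = (L n * sin (u n) - c * sqrt (L n)) + sin (u n) * dh n
      - u n * dm n / 2) sequentially"
    using eventually_ge_at_top[of 1] evL proof eventually_elim
    case (elim n)
    have sq: "L n / sqrt (L n) = sqrt (L n)" using elim(2) by (simp add: real_div_sqrt)
    have th': "th n = - (c * \<mu> * sqrt (L n))"
    proof -
      have "t * \<mu> * L n / (\<sigma> * sqrt (L n)) = (t * \<mu> / \<sigma>) * (L n / sqrt (L n))" by (rule times_divide_times_eq[symmetric])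
      then show ?thesis using sq by (simp add: th_def c_def)
    qed
    have uL: "u n * L n = c * sqrt (L n)" unfolding u_def using sq by (metis times_divide_eq_left times_divide_eq_right)
    have mu: "\<mu> = 1 - \<kappa>/2" using rel1 by simp
    have "ImE n = - (c * \<mu> * sqrt (L n)) + sin (u n) * (L n + dh n) - u n * (\<kappa> * L n + dm n) / 2"
      unfolding ImE_def th' using elim(1) by (simp add: h_eq dm_def)
    also have "\<dots> = (L n * sin (u n) - c * sqrt (L n)) + sin (u n) * dh n - u n * dm n / 2
         + (c * sqrt (L n) * (1 - \<mu> - \<kappa> / 2))"
      by (simp add: algebra_simps uL[symmetric])
    finally show ?case by (simp add: mu)
  qed
  have lImE: "ImE \<longlonglongrightarrow> 0"
  proof -
    have "(\<lambda>n. (L n * sin (u n) - c * sqrt (L n)) + sin (u n) * dh n - u n * dm n / 2)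
      \<longlonglongrightarrow> 0 + 0 * (euler_mascheroni - 1) - 0 / 2"
      by (intro tendsto_intros l2 l6 ldh bnd_null[OF dmb l7]) auto
    then have "(\<lambda>n. (L n * sin (u n) - c * sqrt (L n)) + sin (u n) * dh n - u n * dm n / 2) \<longlonglongrightarrow> 0" by simp
    then show ?thesis by (rule Lim_transform_eventually) (use ImE_ev in \<open>eventually_elim, simp\<close>)
  qed
  define E where "E n = complex_of_real (ReE n) + \<i> * complex_of_real (ImE n)" for n
  have lexpE: "(\<lambda>n. exp (E n)) \<longlonglongrightarrow> complex_of_real (exp (- (t^2) / 2))"
  proof -
    have "(\<lambda>n. exp (E n)) \<longlonglongrightarrow> exp (complex_of_real (- (t^2) / 2) + \<i> * complex_of_real 0)"
      unfolding E_def by (intro tendsto_intros lReE lImE)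
    moreover have "exp (complex_of_real (- (t^2) / 2) + \<i> * complex_of_real 0) = complex_of_real (exp (- (t^2) / 2))"
      by (simp only: of_real_0 mult_zero_right add_0_right exp_of_real)
    ultimately show ?thesis by simp
  qed
  have Gid: "eventually (\<lambda>n. exp (\<i> * complex_of_real (th n)) * exp (- (z n * complex_of_real (h n))) / w n ^ m n = exp (E n)) sequentially"
    using evc proof eventually_elim
    case (elim n)
    show ?case unfolding w_eq z_def E_def ReE_def ImE_def
      by (rule prod_identity[OF elim])
  qed
  have Peq: "(\<Prod>i\<in>{2..n}. 1 - complex_of_real (2 / real i) + complex_of_real (2 / real i) * w n)
      = (\<Prod>i\<in>{2..n}. 1 - complex_of_real (1 / real i) * z n)" for n
    by (intro prod.cong refl) (simp add: w_eq z_def field_simps)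
  have nz: "norm (z n) \<le> \<bar>u n\<bar>" for n
    using iexp_approx1[of "u n" 0] by (simp add: z_def norm_minus_commute)
  have lz: "(\<lambda>n. norm (z n) ^ 2) \<longlonglongrightarrow> 0"
  proof (rule Lim_null_comparison)
    show "eventually (\<lambda>n. norm (norm (z n) ^ 2) \<le> u n ^ 2) sequentially"
    proof (intro always_eventually allI)
      fix n
      have "norm (z n)^2 \<le> \<bar>u n\<bar>^2" by (rule power_mono[OF nz norm_ge_zero])
      then show "norm (norm (z n) ^ 2) \<le> u n ^ 2" by simp
    qed
    show "(\<lambda>n. u n ^ 2) \<longlonglongrightarrow> 0" using tendsto_power[OF l7, of 2] by simp
  qed
  define main where "main n = exp (\<i> * complex_of_real (- (t * \<mu> * ln (real n) / (\<sigma> * sqrt (ln (real n)))))) *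
            (\<Prod>i\<in>{2..n}. 1 - complex_of_real (2 / real i) + complex_of_real (2 / real i) * w n) / w n ^ m n" for n
  have diff: "eventually (\<lambda>n. norm (main n - exp (E n)) \<le> norm (z n) ^ 2 * (1 / norm (w n) ^ m n)) sequentially"
    using Gid eventually_ge_at_top[of 1] proof eventually_elim
    case (elim n)
    define P where "P = (\<Prod>i\<in>{2..n}. 1 - complex_of_real (1 / real i) * z n)"
    define Q where "Q = exp (- (z n * complex_of_real (h n)))"
    define X where "X = exp (\<i> * complex_of_real (th n))"
    have mn: "main n = X * P / w n ^ m n"
      unfolding main_def P_def X_def Peq th_def L_def by simp
    have "main n - exp (E n) = X * P / w n ^ m n - X * Q / w n ^ m n"
      unfolding mn elim(1)[symmetric] X_def Q_def by simp
    also have "\<dots> = X * (P - Q) / w n ^ m n"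
      by (simp only: right_diff_distrib diff_divide_distrib)
    finally have "main n - exp (E n) = exp (\<i> * complex_of_real (th n)) *
       ((\<Prod>i\<in>{2..n}. 1 - complex_of_real (1 / real i) * z n) - exp (- (z n * complex_of_real (h n)))) / w n ^ m n"
      unfolding X_def P_def Q_def .
    also have "norm \<dots> = norm ((\<Prod>i\<in>{2..n}. 1 - complex_of_real (1 / real i) * z n) - exp (- (z n * complex_of_real (h n)))) / norm (w n) ^ m n"
      by (simp add: norm_divide norm_mult norm_power)
    also have "\<dots> \<le> norm (z n) ^ 2 / norm (w n) ^ m n"
      unfolding h_def z_def by (intro divide_right_mono prod_bound elim) auto
    finally show ?case by simp
  qed
  have "(\<lambda>n. main n - exp (E n)) \<longlonglongrightarrow> 0"
  proof (rule Lim_null_comparison[OF diff])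
    show "(\<lambda>n. norm (z n) ^ 2 * (1 / norm (w n) ^ m n)) \<longlonglongrightarrow> 0"
      using tendsto_mult[OF lz lK] by simp
  qed
  from tendsto_add[OF this lexpE] show "main \<longlonglongrightarrow> complex_of_real (exp (- (t^2) / 2))" by simp
qed


lemma binom_gf:
  fixes z :: complex
  shows "measure_pmf.expectation (binomial_pmf N (1/2)) (\<lambda>k. z ^ k) = ((1 + z) / 2) ^ N"
proof -
  have "measure_pmf.expectation (binomial_pmf N (1/2)) (\<lambda>k. z ^ k)
      = (\<Sum>k\<in>{..N}. pmf (binomial_pmf N (1/2)) k *\<^sub>R z ^ k)"
    by (rule integral_measure_pmf) auto
  also have "\<dots> = (\<Sum>k\<in>{..N}. of_nat (N choose k) * z ^ k * 1 ^ (N - k)) / 2 ^ N"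
    by (simp add: sum_divide_distrib scaleR_conv_of_real power_add[symmetric] field_simps)
  also have "\<dots> = ((1 + z) / 2) ^ N"
    by (subst binomial_ring[symmetric]) (simp add: power_divide add.commute atLeast0AtMost)
  finally show ?thesis .
qed

definition innerQ :: "int \<Rightarrow> real \<Rightarrow> real \<Rightarrow> nat \<Rightarrow> real pmf" where
  "innerQ m sh sc s = (if int s \<ge> m then map_pmf (\<lambda>k. (real k - sh) / sc) (binomial_pmf (nat (int s - m)) (1/2)) else return_pmf 0)"

definition Qd :: "int \<Rightarrow> real \<Rightarrow> real \<Rightarrow> nat \<Rightarrow> real pmf" where
  "Qd m sh sc n = bind_pmf (S_size_dist n) (innerQ m sh sc)"

lemma finite_innerQ: "finite (set_pmf (innerQ m sh sc s))"
  unfolding innerQ_def by (auto intro!: finite_set_pmf_binomial_pmf)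

lemma E_S_sum:
  fixes f :: "nat \<Rightarrow> 'b::{banach, second_countable_topology}"
  shows "measure_pmf.expectation (S_size_dist n) f = (\<Sum>a\<in>{..n}. pmf (S_size_dist n) a *\<^sub>R f a)"
  using S_set[of n] by (intro integral_measure_pmf) auto

lemma exp_Qd:
  fixes h :: "real \<Rightarrow> 'b::{banach, second_countable_topology}"
  shows "measure_pmf.expectation (Qd m sh sc n) h =
    measure_pmf.expectation (S_size_dist n) (\<lambda>s. measure_pmf.expectation (innerQ m sh sc s) h)"
  unfolding Qd_def E_S_sum using S_set[of n] finite_innerQ
  by (intro pmf_expectation_bind) auto

lemma char_inner:
  assumes "int s \<ge> m"
  shows "measure_pmf.expectation (innerQ m sh sc s) (\<lambda>x. exp (\<i> * complex_of_real (t * x))) =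
    exp (\<i> * complex_of_real (- (t * sh / sc))) * ((1 + exp (\<i> * complex_of_real (t / sc))) / 2) ^ nat (int s - m)"
proof -
  have eq: "exp (\<i> * complex_of_real (t * ((real k - sh) / sc))) =
      exp (\<i> * complex_of_real (- (t * sh / sc))) * exp (\<i> * complex_of_real (t / sc)) ^ k" for k
  proof -
    have "exp (\<i> * complex_of_real (t * ((real k - sh) / sc))) =
       exp (\<i> * complex_of_real (- (t * sh / sc)) + of_nat k * (\<i> * complex_of_real (t / sc)))"
      by (rule arg_cong[where f=exp]) (simp add: algebra_simps diff_divide_distrib)
    also have "\<dots> = exp (\<i> * complex_of_real (- (t * sh / sc))) * exp (of_nat k * (\<i> * complex_of_real (t / sc)))"
      by (rule exp_add)
    also have "exp (of_nat k * (\<i> * complex_of_real (t / sc))) = exp (\<i> * complex_of_real (t / sc)) ^ k"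
      by (rule exp_of_nat_mult)
    finally show ?thesis .
  qed
  have i: "innerQ m sh sc s = map_pmf (\<lambda>k. (real k - sh) / sc) (binomial_pmf (nat (int s - m)) (1/2))"
    using assms by (simp add: innerQ_def)
  show ?thesis
    unfolding i integral_map_pmf eq integral_mult_right_zero binom_gf ..
qed



lemma intS:
  fixes f :: "nat \<Rightarrow> 'b::{banach, second_countable_topology}"
  shows "integrable (measure_pmf (S_size_dist n)) f"
  by (rule integrable_measure_pmf_finite[OF S_finite])

lemma char_err:
  fixes t sh sc :: real and m :: int
  assumes "m \<ge> 0"
  defines "w \<equiv> (1 + exp (\<i> * complex_of_real (t / sc))) / 2"
  defines "C \<equiv> exp (\<i> * complex_of_real (- (t * sh / sc)))"
  assumes wnz: "w \<noteq> 0"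
  shows "norm (measure_pmf.expectation (Qd m sh sc n) (\<lambda>x. exp (\<i> * complex_of_real (t * x)))
          - C * measure_pmf.expectation (S_size_dist n) (\<lambda>s. w ^ s) / w ^ nat m)
        \<le> (1 + 1 / norm w ^ nat m) * measure_pmf.expectation (S_size_dist n) (indicator {s. s < nat m})"
proof -
  define g where "g s = measure_pmf.expectation (innerQ m sh sc s) (\<lambda>x. exp (\<i> * complex_of_real (t * x)))" for s
  define K where "K = 1 + 1 / norm w ^ nat m"
  have nw: "norm w \<le> 1"
  proof -
    have "norm (1 + exp (\<i> * complex_of_real (t / sc))) \<le> norm (1::complex) + norm (exp (\<i> * complex_of_real (t / sc)))"
      by (rule norm_triangle_ineq)
    then show ?thesis by (simp add: w_def norm_divide)
  qed
  have nwp: "norm w > 0" using wnz by simp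
  have pt: "norm (g s - C * w ^ s / w ^ nat m) \<le> K * indicator {s. s < nat m} s" for s
  proof (cases "int s \<ge> m")
    case True
    have nd: "nat (int s - m) = s - nat m" using True assms(1) by (simp add: nat_diff_distrib)
    have "g s = C * w ^ (s - nat m)" unfolding g_def C_def w_def char_inner[OF True] nd ..
    also have "\<dots> = C * w ^ s / w ^ nat m" using True wnz by (simp add: power_diff)
    finally show ?thesis using True by simp
  next
    case False
    then have g1: "g s = 1" by (simp add: g_def innerQ_def)
    have "norm (1 - C * w ^ s / w ^ nat m) \<le> norm (1::complex) + norm (C * w ^ s / w ^ nat m)"
      by (rule norm_triangle_ineq4)
    also have "norm (C * w ^ s / w ^ nat m) = norm w ^ s / norm w ^ nat m"
      by (simp add: C_def norm_mult norm_divide norm_power)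
    also have "norm w ^ s \<le> 1" using nw by (simp add: power_le_one)
    then have "norm w ^ s / norm w ^ nat m \<le> 1 / norm w ^ nat m"
      using nwp by (intro divide_right_mono) auto
    finally show ?thesis using False by (simp add: g1 K_def)
  qed
  have "measure_pmf.expectation (Qd m sh sc n) (\<lambda>x. exp (\<i> * complex_of_real (t * x)))
          - C * measure_pmf.expectation (S_size_dist n) (\<lambda>s. w ^ s) / w ^ nat m
        = measure_pmf.expectation (S_size_dist n) (\<lambda>s. g s - C * w ^ s / w ^ nat m)"
  proof -
    have a: "measure_pmf.expectation (Qd m sh sc n) (\<lambda>x. exp (\<i> * complex_of_real (t * x))) =
       measure_pmf.expectation (S_size_dist n) g" unfolding exp_Qd g_def ..
    have b: "C * measure_pmf.expectation (S_size_dist n) (\<lambda>s. w ^ s) / w ^ nat m =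
       measure_pmf.expectation (S_size_dist n) (\<lambda>s. C * w ^ s / w ^ nat m)"
      by (simp only: integral_mult_right_zero integral_divide_zero)
    show ?thesis unfolding a b by (rule Bochner_Integration.integral_diff[OF intS intS, symmetric])
  qed
  also have "norm \<dots> \<le> measure_pmf.expectation (S_size_dist n) (\<lambda>s. norm (g s - C * w ^ s / w ^ nat m))"
    by (rule integral_norm_bound)
  also have "\<dots> \<le> measure_pmf.expectation (S_size_dist n) (\<lambda>s. K * indicator {s. s < nat m} s)"
    by (intro integral_mono intS pt)
  also have "\<dots> = K * measure_pmf.expectation (S_size_dist n) (indicator {s. s < nat m})"
    by simp
  finally show ?thesis by (simp add: K_def)
qed



lemma chernoff:
  assumes "n \<ge> 1"
  shows "measure_pmf.expectation (S_size_dist n) (indicator {s. s < k}) \<le> (4/3::real)^k * exp (- (harm n - 1) / 2)"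
proof -
  have pt: "indicator {s. s < k} s \<le> (4/3::real)^k * (3/4)^s" for s
  proof (cases "s < k")
    case True
    have "(3/4::real)^k \<le> (3/4)^s" using True by (intro power_decreasing) auto
    then have "(4/3::real)^k * (3/4)^k \<le> (4/3)^k * (3/4)^s" by (intro mult_left_mono) auto
    moreover have "(4/3::real)^k * (3/4)^k = 1" by (simp add: power_mult_distrib[symmetric])
    ultimately show ?thesis using True by simp
  qed simp
  have "measure_pmf.expectation (S_size_dist n) (indicator {s. s < k}) \<le>
        measure_pmf.expectation (S_size_dist n) (\<lambda>s. (4/3::real)^k * (3/4)^s)"
    by (intro integral_mono intS pt)
  also have "\<dots> = (4/3)^k * measure_pmf.expectation (S_size_dist n) (\<lambda>s. (3/4::real)^s)"
    by simp
  also have "measure_pmf.expectation (S_size_dist n) (\<lambda>s. (3/4::real)^s) = (\<Prod>i\<in>{2..n}. 1 - 1 / (2 * real i))"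
    unfolding S_gf by (intro prod.cong refl) (simp add: field_simps)
  also have "\<dots> \<le> (\<Prod>i\<in>{2..n}. exp (- (1 / (2 * real i))))"
  proof (intro prod_mono conjI)
    fix i assume "i \<in> {2..n}"
    then show "0 \<le> 1 - 1 / (2 * real i)" by (simp add: field_simps)
    show "1 - 1 / (2 * real i) \<le> exp (- (1 / (2 * real i)))"
      using exp_ge_add_one_self[of "- (1 / (2 * real i))"] by simp
  qed
  also have "\<dots> = exp (- (\<Sum>i\<in>{2..n}. 1 / real i) / 2)"
    by (simp add: exp_sum[symmetric] sum_negf sum_divide_distrib mult.commute)
  also have "\<dots> = exp (- (harm n - 1) / 2)" using h_harm[OF assms] by simp
  finally show ?thesis by (simp add: mult_left_mono)
qed

lemma ps_lim:
  fixes a :: real and b :: int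
  assumes "0 \<le> a" "a \<le> 1"
  shows "(\<lambda>n. measure_pmf.expectation (S_size_dist n) (indicator {s. s < nat (\<lfloor>a * log 2 (real n)\<rfloor> + b)} :: nat \<Rightarrow> real)) \<longlonglongrightarrow> 0"
proof -
  define \<delta> :: real where "\<delta> = 1/2 - ln (4/3) / ln 2"
  have "ln ((4/3::real)^2) < ln 2" by (simp add: power2_eq_square)
  then have "2 * ln (4/3::real) < ln 2" by (simp add: ln_realpow)
  then have \<delta>: "\<delta> > 0" unfolding \<delta>_def by (simp add: field_simps)
  define C :: real where "C = exp (ln (4/3) * \<bar>b\<bar> + 1/2)"
  have bound: "measure_pmf.expectation (S_size_dist n) (indicator {s. s < nat (\<lfloor>a * log 2 (real n)\<rfloor> + b)})
     \<le> C * real n powr (- \<delta>)" if n: "n \<ge> 1" for n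
  proof -
    define k where "k = nat (\<lfloor>a * log 2 (real n)\<rfloor> + b)"
    have lg: "log 2 (real n) \<ge> 0" using n by simp
    have "real k \<le> log 2 (real n) + \<bar>b\<bar>"
    proof -
      have "real_of_int (\<lfloor>a * log 2 (real n)\<rfloor> + b) \<le> a * log 2 (real n) + b" by linarith
      also have "\<dots> \<le> log 2 (real n) + \<bar>b\<bar>"
        using assms lg mult_right_mono[OF assms(2) lg] by linarith
      finally show ?thesis unfolding k_def using lg by (cases "\<lfloor>a * log 2 (real n)\<rfloor> + b \<ge> 0") auto
    qed
    have "(4/3::real)^k = exp (real k * ln (4/3))" by (subst exp_of_nat_mult) simp
    also have "\<dots> \<le> exp ((log 2 (real n) + \<bar>b\<bar>) * ln (4/3))"
      using \<open>real k \<le> _\<close> by (intro exp_le_cancel_iff[THEN iffD2] mult_right_mono) auto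
    finally have k1: "(4/3::real)^k \<le> exp ((log 2 (real n) + \<bar>b\<bar>) * ln (4/3))" .
    have k2: "exp (- (harm n - 1) / 2) \<le> exp (- (ln (real n) - 1) / 2)"
    proof -
      have "ln (real n) \<le> ln (real n + 1)" using n by simp
      then have "ln (real n) \<le> harm n" using harm_ge_ln[of n] by linarith
      then show ?thesis by simp
    qed
    have "measure_pmf.expectation (S_size_dist n) (indicator {s. s < k}) \<le> (4/3::real)^k * exp (- (harm n - 1) / 2)"
      by (rule chernoff[OF n])
    also have "\<dots> \<le> exp ((log 2 (real n) + \<bar>b\<bar>) * ln (4/3)) * exp (- (ln (real n) - 1) / 2)"
      by (intro mult_mono k1 k2) auto
    also have "\<dots> = C * exp (- \<delta> * ln (real n))"
      unfolding C_def \<delta>_def by (simp add: mult_exp_exp log_def field_simps)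
    also have "\<dots> = C * real n powr (- \<delta>)" using n by (simp add: powr_def)
    finally show ?thesis unfolding k_def .
  qed
  show ?thesis
  proof (rule Lim_null_comparison)
    show "eventually (\<lambda>n. norm (measure_pmf.expectation (S_size_dist n) (indicator {s. s < nat (\<lfloor>a * log 2 (real n)\<rfloor> + b)} :: nat \<Rightarrow> real)) \<le> C * real n powr (- \<delta>)) sequentially"
      using eventually_ge_at_top[of 1] proof eventually_elim
      case (elim n)
      have "0 \<le> measure_pmf.expectation (S_size_dist n) (indicator {s. s < nat (\<lfloor>a * log 2 (real n)\<rfloor> + b)} :: nat \<Rightarrow> real)"
        by (intro integral_nonneg_AE) auto
      then show ?case using bound[OF elim] by simp
    qed
    show "(\<lambda>n. C * real n powr (- \<delta>)) \<longlonglongrightarrow> 0"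
      using \<delta> tendsto_mult_right_zero[OF tendsto_neg_powr[of "- \<delta>", OF _ filterlim_real_sequentially]] by simp
  qed
qed



lemma sets_N[measurable_cong, simp]: "sets std_normal = sets borel"
  by (simp add: std_normal_def)
lemma space_N[simp]: "space std_normal = UNIV"
  by (simp add: std_normal_def)
lemma prob_N: "prob_space std_normal"
  unfolding std_normal_def by (rule prob_space_normal_density) simp

interpretation N: prob_space std_normal by (rule prob_N)
interpretation NN: pair_prob_space std_normal std_normal
  by unfold_locales

lemma distr_fst: "distr (std_normal \<Otimes>\<^sub>M std_normal) borel fst = std_normal"
proof -
  have "distr (std_normal \<Otimes>\<^sub>M std_normal) borel fst = distr (std_normal \<Otimes>\<^sub>M std_normal) std_normal fst"
    by (rule distr_cong) auto
  also have "\<dots> = std_normal" by (rule N.distr_pair_fst)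
  finally show ?thesis .
qed

lemma distr_snd: "distr (std_normal \<Otimes>\<^sub>M std_normal) borel snd = std_normal"
proof (intro measure_eqI)
  fix A assume A: "A \<in> sets (distr (std_normal \<Otimes>\<^sub>M std_normal) borel snd)"
  then have A': "A \<in> sets std_normal" by simp
  have "emeasure (distr (std_normal \<Otimes>\<^sub>M std_normal) borel snd) A = emeasure (std_normal \<Otimes>\<^sub>M std_normal) (space std_normal \<times> A)"
    using A by (subst emeasure_distr) (auto simp: space_pair_measure intro!: arg_cong2[where f=emeasure])
  also have "\<dots> = emeasure std_normal A"
    using A' N.emeasure_space_1 by (simp add: N.emeasure_pair_measure_Times)
  finally show "emeasure (distr (std_normal \<Otimes>\<^sub>M std_normal) borel snd) A = emeasure std_normal A" .
qed simp

lemma indep_fst_snd: "prob_space.indep_var (std_normal \<Otimes>\<^sub>M std_normal) borel fst borel snd"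
proof -
  have e: "distr (std_normal \<Otimes>\<^sub>M std_normal) (borel \<Otimes>\<^sub>M borel) (\<lambda>x. (fst x, snd x)) = std_normal \<Otimes>\<^sub>M std_normal"
  proof -
    have "distr (std_normal \<Otimes>\<^sub>M std_normal) (borel \<Otimes>\<^sub>M borel) (\<lambda>x. (fst x, snd x))
        = distr (std_normal \<Otimes>\<^sub>M std_normal) (borel \<Otimes>\<^sub>M borel) (\<lambda>x. x)" by simp
    also have "\<dots> = std_normal \<Otimes>\<^sub>M std_normal"
      by (rule distr_id2) (rule sets_pair_measure_cong; simp)
    finally show ?thesis .
  qed
  have r1: "fst \<in> measurable (std_normal \<Otimes>\<^sub>M std_normal) borel" by measurable
  have r2: "snd \<in> measurable (std_normal \<Otimes>\<^sub>M std_normal) borel" by measurable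
  show ?thesis
    by (rule NN.P.indep_var_distribution_eq[THEN iffD2]) (simp only: r1 r2 e distr_fst distr_snd; simp)
qed

lemma distr_lborel_fst: "distr (std_normal \<Otimes>\<^sub>M std_normal) lborel fst = std_normal"
  using distr_fst by (metis distr_cong sets_lborel)
lemma distr_lborel_snd: "distr (std_normal \<Otimes>\<^sub>M std_normal) lborel snd = std_normal"
  using distr_snd by (metis distr_cong sets_lborel)

lemma conv_Phi:
  fixes s c :: real
  assumes s: "s > 0"
  shows "integral\<^sup>L std_normal (\<lambda>y. Phi ((c - y) / s)) = Phi (c / sqrt (1 + s^2))"
proof -
  define P where "P = std_normal \<Otimes>\<^sub>M std_normal"
  define A where "A = {p::real\<times>real. fst p + s * snd p \<le> c}"
  have spP: "space P = UNIV" by (simp add: P_def space_pair_measure)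
  have A[measurable]: "A \<in> sets P"
  proof -
    have "A = {p \<in> space P. fst p + s * snd p \<le> c}" by (simp add: A_def spP)
    also have "\<dots> \<in> sets P" unfolding P_def by measurable
    finally show ?thesis .
  qed
  have s1: "Phi ((c - y) / s) = measure std_normal {z. (y, z) \<in> A}" for y
  proof -
    have "{..(c - y) / s} = {z. (y, z) \<in> A}" using s by (auto simp: A_def pos_le_divide_eq algebra_simps)
    then show ?thesis by (simp add: Phi_def)
  qed
  have s2: "measure std_normal {z. (y, z) \<in> A} = (\<integral>z. indicator A (y, z) \<partial>std_normal)" for y
  proof -
    have "(\<lambda>z. indicator A (y, z) :: real) = indicator {z. (y, z) \<in> A}" by (auto simp: indicator_def)
    then show ?thesis by simp
  qed
  have intA: "integrable P (indicator A :: real\<times>real \<Rightarrow> real)"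
    unfolding P_def by (rule NN.P.integrable_const_bound[where B=1]) (auto simp: P_def[symmetric])
  have "integral\<^sup>L std_normal (\<lambda>y. Phi ((c - y) / s)) = (\<integral>y. (\<integral>z. indicator A (y, z) \<partial>std_normal) \<partial>std_normal)"
    by (simp only: s1 s2)
  also have "\<dots> = integral\<^sup>L P (indicator A)"
    unfolding P_def by (rule NN.integral_fst'[OF intA[unfolded P_def]])
  also have "\<dots> = measure P A" by (simp add: spP)
  finally have eq1: "integral\<^sup>L std_normal (\<lambda>y. Phi ((c - y) / s)) = measure P A" .
  define \<tau> where "\<tau> = sqrt (1 + s^2)"
  have \<tau>: "\<tau> > 0" unfolding \<tau>_def by (simp add: add_pos_nonneg)
  have dX: "distributed P lborel fst std_normal_density"
    unfolding distributed_def P_def distr_lborel_fst by (simp add: std_normal_def)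
  have dY: "distributed P lborel snd std_normal_density"
    unfolding distributed_def P_def distr_lborel_snd by (simp add: std_normal_def)
  have dY': "distributed P lborel (\<lambda>p. 0 + s * snd p) (normal_density (0 + s * 0) (\<bar>s\<bar> * 1))"
    using NN.P.normal_density_affine[OF dY[unfolded P_def], where \<alpha>=s and \<beta>=0] s unfolding P_def by simp
  have ind: "prob_space.indep_var P borel fst borel (\<lambda>p. s * snd p)"
  proof -
    have "prob_space.indep_var P borel ((\<lambda>x. x) \<circ> fst) borel ((\<lambda>x. s * x) \<circ> snd)"
      unfolding P_def by (rule NN.P.indep_var_compose[OF indep_fst_snd]) auto
    then show ?thesis by (simp add: o_def)
  qed
  have dV: "distributed P lborel (\<lambda>p. fst p + s * snd p) (normal_density (0 + 0) (sqrt (1^2 + s^2)))"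
    unfolding P_def
    by (rule NN.P.add_indep_normal[OF ind[unfolded P_def]]) (use s dX dY' in \<open>auto simp: P_def\<close>)
  then have "distributed P lborel (\<lambda>p. ((fst p + s * snd p) - 0) / \<tau>) std_normal_density"
    unfolding P_def \<tau>_def using NN.P.normal_standard_normal_convert[of "sqrt (1 + s^2)"] \<tau>[unfolded \<tau>_def]
    by (simp add: P_def)
  then have dW: "distr P lborel (\<lambda>p. (fst p + s * snd p) / \<tau>) = std_normal"
    by (simp add: distributed_def std_normal_def)
  have mW: "(\<lambda>p. (fst p + s * snd p) / \<tau>) \<in> measurable P lborel" unfolding P_def by measurable
  have "measure P A = measure P ((\<lambda>p. (fst p + s * snd p) / \<tau>) -` {..c / \<tau>} \<inter> space P)"
    using \<tau> by (intro arg_cong[where f="measure P"]) (auto simp: A_def spP divide_le_cancel)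
  also have "\<dots> = measure (distr P lborel (\<lambda>p. (fst p + s * snd p) / \<tau>)) {..c / \<tau>}"
    by (rule measure_distr[symmetric, OF mW]) simp
  also have "\<dots> = Phi (c / \<tau>)" unfolding dW Phi_def ..
  finally show ?thesis unfolding eq1 \<tau>_def .
qed



lemma log2_exp: "log 2 (exp 1) = 1 / ln 2"
  by (simp add: log_def)

lemma params:
  fixes a :: real
  assumes "0 \<le> a" "a \<le> 1"
  shows "mu_a a > 0" "sigma2_a a > 0" "mu_a a + (a / ln 2) / 2 = 1" "sigma2_a a = 1 - (a / ln 2) / 4"
    "1 + mu_a a = 2 * sigma2_a a"
proof -
  have l2: "ln 2 \<ge> (2/3::real)" by (rule ln2_ge_two_thirds)
  have "a / ln 2 \<le> 1 / ln 2" using assms l2 by (intro divide_right_mono) auto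
  also have "\<dots> \<le> 3/2" using l2 by (simp add: field_simps)
  finally have k: "a / ln 2 \<le> 3/2" .
  have "a < ln 2 * 2" "a < ln 2 * 4" using l2 assms by linarith+
  then show "mu_a a > 0" "sigma2_a a > 0" by (simp_all add: mu_a_def sigma2_a_def log2_exp field_simps)
  show "mu_a a + (a / ln 2) / 2 = 1" "sigma2_a a = 1 - (a / ln 2) / 4" "1 + mu_a a = 2 * sigma2_a a"
    by (simp_all add: mu_a_def sigma2_a_def log2_exp)
qed

lemma rdist: "real_distribution (distr (measure_pmf Q) borel (\<lambda>x::real. x))"
proof -
  interpret prob_space "distr (measure_pmf Q) borel (\<lambda>x::real. x)"
    by (rule measure_pmf.prob_space_distr) simp
  show ?thesis by unfold_locales simp
qed

lemma char_M: "char (distr (measure_pmf Q) borel (\<lambda>x::real. x)) t = measure_pmf.expectation Q (\<lambda>x. exp (\<i> * complex_of_real (t * x)))"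
  unfolding char_def by (subst integral_distr) auto

lemma meas_M: "measure (distr (measure_pmf Q) borel (\<lambda>x::real. x)) A = measure_pmf.prob Q A" if "A \<in> sets borel"
  using that by (subst measure_distr) auto

lemma null_x: "emeasure std_normal_distribution {x} = 0"
proof -
  have "AE y in lborel. y \<noteq> x" by (rule AE_I'[of "{x}"]) (auto simp: null_sets_def)
  then have ae: "AE y in lborel. y \<in> {x} \<longrightarrow> ennreal (std_normal_density y) = 0" by eventually_elim auto
  have "{x} \<in> null_sets std_normal_distribution" using ae by (subst null_sets_density_iff) auto
  then show ?thesis by auto
qed

lemma Phi_eq: "Phi x = measure std_normal_distribution {..<x}"
proof -
  have "{..x} = insert x {..<x}" by auto
  then have "Phi x = measure std_normal_distribution (insert x {..<x})"
    by (simp add: Phi_def std_normal_def)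
  also have "\<dots> = measure std_normal_distribution {..<x}"
  proof -
    interpret real_distribution std_normal_distribution by (rule real_dist_normal_dist)
    show ?thesis using null_x[of x]
      by (subst finite_measure_Union'[of "{x}" "{..<x}", simplified]) (auto simp: measure_def)
  qed
  finally show ?thesis .
qed



lemma u_lim: "((\<lambda>n::nat. t / (\<sigma> * sqrt (ln (real n)))) \<longlongrightarrow> 0) sequentially"
proof -
  have Lf: "filterlim (\<lambda>n::nat. ln (real n)) at_top sequentially"
    by (rule filterlim_compose[OF ln_at_top filterlim_real_sequentially])
  show ?thesis using filterlim_compose[OF lim7[of "t/\<sigma>"] Lf] by simp
qed

theorem lemma3p4:
  fixes a x :: real and b :: int
  assumes "0 \<le> a" "a \<le> 1"
  assumes "eventually (\<lambda>n::nat. \<lfloor>a * log 2 (real n)\<rfloor> + b \<ge> 0) sequentially"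
  shows "(\<lambda>n::nat. measure_pmf.expectation (S_size_dist n)
            (\<lambda>t. Gtilde (\<lfloor>a * log 2 (real n)\<rfloor> + b)
                     (x * sqrt (sigma2_a a * ln (real n)) + mu_a a * ln (real n)) t))
         \<longlonglongrightarrow> integral\<^sup>L std_normal
               (\<lambda>y. Phi ((sqrt (2 * sigma2_a a) * x - y) / sqrt (mu_a a)))"
proof -
  note P = params[OF assms(1,2)]
  define \<kappa> where "\<kappa> = a / ln 2"
  define \<mu> where "\<mu> = mu_a a"
  define \<sigma>2 where "\<sigma>2 = sigma2_a a"
  define \<sigma> where "\<sigma> = sqrt \<sigma>2"
  have \<mu>pos: "\<mu> > 0" and \<sigma>2pos: "\<sigma>2 > 0" using P by (simp_all add: \<mu>_def \<sigma>2_def)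
  have \<sigma>pos: "\<sigma> > 0" using \<sigma>2pos by (simp add: \<sigma>_def)
  have rel1: "\<mu> + \<kappa>/2 = 1" using P by (simp add: \<mu>_def \<kappa>_def)
  have rel2: "\<sigma>^2 = 1 - \<kappa>/4" using P \<sigma>2pos by (simp add: \<sigma>_def \<sigma>2_def \<kappa>_def)
  define m where "m n = \<lfloor>a * log 2 (real n)\<rfloor> + b" for n
  define L where "L n = ln (real n)" for n
  define sh where "sh n = \<mu> * L n" for n
  define sc where "sc n = \<sigma> * sqrt (L n)" for n
  define Q where "Q n = Qd (m n) (sh n) (sc n) n" for n
  define M where "M n = distr (measure_pmf (Q n)) borel (\<lambda>x::real. x)" for n
  define ps where "ps n = measure_pmf.expectation (S_size_dist n) (indicator {s. s < nat (m n)} :: nat \<Rightarrow> real)" for n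
  have ps0: "ps \<longlonglongrightarrow> 0" unfolding ps_def m_def by (rule ps_lim[OF assms(1,2)])
  have evm: "eventually (\<lambda>n. m n \<ge> 0) sequentially" using assms(3) by (simp add: m_def)
  have evL: "eventually (\<lambda>n. L n > 0) sequentially"
    using eventually_ge_at_top[of 2] by eventually_elim (simp add: L_def)
  have mb: "eventually (\<lambda>n. \<bar>real (nat (m n)) - \<kappa> * ln (real n)\<bar> \<le> \<bar>b\<bar> + 1) sequentially"
    using evm proof eventually_elim
    case (elim n)
    have e: "a * log 2 (real n) = \<kappa> * ln (real n)" by (simp add: \<kappa>_def log_def)
    have "real (nat (m n)) = real_of_int (m n)" using elim by simp
    also have "\<dots> = real_of_int \<lfloor>\<kappa> * ln (real n)\<rfloor> + b" by (simp add: m_def e)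
    finally have r: "real (nat (m n)) = real_of_int \<lfloor>\<kappa> * ln (real n)\<rfloor> + b" .
    show ?case unfolding r by linarith
  qed
  have charconv: "(\<lambda>n. char (M n) t) \<longlonglongrightarrow> char std_normal_distribution t" for t
  proof -
    define w where "w n = (1 + exp (\<i> * complex_of_real (t / (\<sigma> * sqrt (ln (real n)))))) / 2" for n
    note CA = char_asymp[OF \<sigma>pos rel1 rel2 mb, of t]
    define main where "main n = exp (\<i> * complex_of_real (- (t * \<mu> * ln (real n) / (\<sigma> * sqrt (ln (real n)))))) *
            (\<Prod>i\<in>{2..n}. 1 - complex_of_real (2 / real i) + complex_of_real (2 / real i) * w n) / w n ^ nat (m n)" for n
    have lmain: "main \<longlonglongrightarrow> complex_of_real (exp (- (t^2) / 2))"
      using CA(1) unfolding main_def w_def .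
    have lK: "(\<lambda>n. 1 / norm (w n) ^ nat (m n)) \<longlonglongrightarrow> exp (\<kappa> * ((t/\<sigma>) * (t/\<sigma>)) / 8)"
      using CA(2) unfolding w_def .
    have w1: "w \<longlonglongrightarrow> (1 + exp (\<i> * complex_of_real 0)) / 2"
      unfolding w_def by (intro tendsto_intros u_lim) simp
    have evw: "eventually (\<lambda>n. w n \<noteq> 0) sequentially"
      by (rule tendsto_imp_eventually_ne[OF w1]) simp
    have err: "eventually (\<lambda>n. norm (char (M n) t - main n) \<le> (1 + 1 / norm (w n) ^ nat (m n)) * ps n) sequentially"
      using evm evw proof eventually_elim
      case (elim n)
      have ww: "w n = (1 + exp (\<i> * complex_of_real (t / sc n))) / 2" by (simp add: w_def sc_def L_def)
      have cm: "exp (\<i> * complex_of_real (- (t * sh n / sc n))) * measure_pmf.expectation (S_size_dist n) (\<lambda>s. w n ^ s) / w n ^ nat (m n)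
          = main n"
        by (simp add: main_def S_gf sh_def sc_def L_def mult.assoc)
      have "char (M n) t = measure_pmf.expectation (Q n) (\<lambda>x. exp (\<i> * complex_of_real (t * x)))"
        unfolding M_def by (rule char_M)
      moreover have "norm (measure_pmf.expectation (Q n) (\<lambda>x. exp (\<i> * complex_of_real (t * x))) - main n)
          \<le> (1 + 1 / norm (w n) ^ nat (m n)) * ps n"
        using char_err[OF elim(1), of t "sc n" "sh n" n, folded ww, OF elim(2)]
        unfolding cm ps_def Q_def .
      ultimately show ?case by simp
    qed
    have "(\<lambda>n. char (M n) t - main n) \<longlonglongrightarrow> 0"
    proof (rule Lim_null_comparison[OF err])
      show "(\<lambda>n. (1 + 1 / norm (w n) ^ nat (m n)) * ps n) \<longlonglongrightarrow> 0"
        using tendsto_mult[OF tendsto_add[OF tendsto_const lK] ps0] by simp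
    qed
    from tendsto_add[OF this lmain] show ?thesis by (simp add: char_std_normal_distribution)
  qed
  have wc: "weak_conv_m M std_normal_distribution"
    by (rule levy_continuity[OF _ real_dist_normal_dist charconv]) (simp add: M_def rdist)
  have lim1: "(\<lambda>n. measure (M n) {..<x}) \<longlonglongrightarrow> measure std_normal_distribution {..<x}"
    by (rule weak_conv_imp_continuity_set_conv[OF _ real_dist_normal_dist wc])
       (auto simp: M_def rdist null_x)
  define l where "l n = x * sqrt (sigma2_a a * ln (real n)) + mu_a a * ln (real n)" for n
  define LHS where "LHS n = measure_pmf.expectation (S_size_dist n) (\<lambda>t. Gtilde (m n) (l n) t)" for n
  have diff: "eventually (\<lambda>n. norm (LHS n - measure (M n) {..<x}) \<le> ps n) sequentially"
    using evm evL proof eventually_elim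
    case (elim n)
    define I where "I s = measure_pmf.expectation (innerQ (m n) (sh n) (sc n) s) (indicator {..<x} :: real \<Rightarrow> real)" for s
    have scpos: "sc n > 0" using elim(2) \<sigma>pos by (simp add: sc_def)
    have mM: "measure (M n) {..<x} = measure_pmf.expectation (S_size_dist n) I"
    proof -
      have "measure (M n) {..<x} = measure_pmf.prob (Q n) {..<x}" unfolding M_def by (rule meas_M) simp
      also have "\<dots> = measure_pmf.expectation (Q n) (indicator {..<x} :: real \<Rightarrow> real)" by simp
      also have "\<dots> = measure_pmf.expectation (S_size_dist n) I" unfolding Q_def I_def by (rule exp_Qd)
      finally show ?thesis .
    qed
    have pt: "norm (Gtilde (m n) (l n) s - I s) \<le> indicator {s. s < nat (m n)} s" for s
    proof (cases "int s \<ge> m n")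
      case True
      have iq: "innerQ (m n) (sh n) (sc n) s = map_pmf (\<lambda>k. (real k - sh n) / sc n) (binomial_pmf (nat (int s - m n)) (1/2))"
        using True by (simp add: innerQ_def)
      have set_eq: "{k. (real k - sh n) / sc n < x} = {k. real k < l n}"
      proof -
        have "sqrt (sigma2_a a * ln (real n)) = sc n"
          by (simp add: sc_def \<sigma>_def \<sigma>2_def L_def real_sqrt_mult)
        then have "l n = x * sc n + sh n" by (simp add: l_def sh_def \<mu>_def L_def)
        then show ?thesis using scpos by (auto simp: divide_less_eq algebra_simps)
      qed
      have "I s = measure_pmf.expectation (binomial_pmf (nat (int s - m n)) (1/2)) (\<lambda>k. indicator {..<x} ((real k - sh n) / sc n) :: real)"
        unfolding I_def iq integral_map_pmf ..
      also have "(\<lambda>k. indicator {..<x} ((real k - sh n) / sc n) :: real) = indicator {k. (real k - sh n) / sc n < x}"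
        by (auto simp: indicator_def)
      also have "measure_pmf.expectation (binomial_pmf (nat (int s - m n)) (1/2)) \<dots> = Gtilde (m n) (l n) s"
        using True by (simp add: Gtilde_def set_eq)
      finally show ?thesis using True elim(1) by simp
    next
      case False
      then have "s < nat (m n)" by linarith
      moreover have "I s = indicator {..<x} (0::real)" using False by (simp add: I_def innerQ_def)
      ultimately show ?thesis using False by (simp add: Gtilde_def indicator_def)
    qed
    have "LHS n - measure (M n) {..<x} = measure_pmf.expectation (S_size_dist n) (\<lambda>s. Gtilde (m n) (l n) s - I s)"
      unfolding LHS_def mM by (rule Bochner_Integration.integral_diff[OF intS intS, symmetric])
    also have "norm \<dots> \<le> measure_pmf.expectation (S_size_dist n) (\<lambda>s. norm (Gtilde (m n) (l n) s - I s))"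
      by (rule integral_norm_bound)
    also have "\<dots> \<le> ps n" unfolding ps_def by (intro integral_mono intS pt)
    finally show ?case .
  qed
  have "(\<lambda>n. LHS n - measure (M n) {..<x}) \<longlonglongrightarrow> 0"
    by (rule Lim_null_comparison[OF diff ps0])
  from tendsto_add[OF this lim1] have limL: "LHS \<longlonglongrightarrow> Phi x" by (simp add: Phi_eq)
  have rhs: "integral\<^sup>L std_normal (\<lambda>y. Phi ((sqrt (2 * sigma2_a a) * x - y) / sqrt (mu_a a))) = Phi x"
  proof -
    have "integral\<^sup>L std_normal (\<lambda>y. Phi ((sqrt (2 * sigma2_a a) * x - y) / sqrt (mu_a a)))
        = Phi (sqrt (2 * sigma2_a a) * x / sqrt (1 + sqrt (mu_a a) ^ 2))"
      by (rule conv_Phi) (use P in simp)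
    also have "sqrt (1 + sqrt (mu_a a) ^ 2) = sqrt (2 * sigma2_a a)" using P by simp
    also have "sqrt (2 * sigma2_a a) * x / sqrt (2 * sigma2_a a) = x" using P(2) by simp
    finally show ?thesis .
  qed
  show ?thesis using limL unfolding rhs LHS_def l_def m_def .
qed
end
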